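(* There exists a constant $C>0$ depending only on $h$ such that for all $\delta\in(-1,1)$ and all $x\in[0,1]^2$, $$|\Psi_\delta(x)-x|\le C|\delta|\,\tilde d(x),$$ where $\tilde d(x)$ denotes the distance from $x$ to the set of corners of $[0,1]^2$.
   Context: Fix a function $h:[0,\tfrac12)\to[0,\infty)$ which is weakly increasing, satisfies $h(r)=0$ for all $r\le\frac1{10}$, $h(r)\to\infty$ as $r\to\frac12$, and is thrice continuously differentiable with $(h'(r))^2=O((r+h(r))^3)$, $h''(r)h'(r)=O((r+h(r))^3)$, $h'''(r)=O((r+h(r))^2)$. Let $r_0\in(0,\frac12)$ be the unique solution of $2r_0h(r_0)+r_0^2=\frac14$, and define $\Theta(r)=\arccos\frac{h(r)}{h(r)+r}$ for $r\le r_0$ and $\Theta(r)=\arcsin\frac{1}{2(h(r)+r)}$ for $r>r_0$. The map $(r,\theta)\mapsto(x_1,x_2)$, $x_1=\frac12+(r+h(r))\sin(\theta\Theta(r))$, $x_2=(r+h(r))\cos(\theta\Theta(r))-h(r)$, is a bijection from $(0,\frac12)\times[-1,1]$ onto $[0,1]\times[0,\frac12)\setminus\{(\frac12,0)\}$; let $K$ denote its inverse. For $\delta\in(-1,1)$ and $r\in(0,\frac12)$, let $w_r(\theta)=1+h'(r)-h'(r)\cos(\theta\Theta(r))$ and let $g_r=g_{r,\delta}:[-1,1]\to[-1,1]$ be the unique increasing bijection with $(1+\delta)\int_{-1}^{\ell}w_r(\theta)\,d\theta=\int_{-1}^{g_r(\ell)}w_r(\theta)\,d\theta$ for $\ell\in[-1,0]$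 and $(1-\delta)\int_{\ell}^{1}w_r(\theta)\,d\theta=\int_{g_r(\ell)}^{1}w_r(\theta)\,d\theta$ for $\ell\in[0,1]$. Define $\Psi_\delta:[0,1]^2\to[0,1]^2$ by: $\Psi_\delta(x)=K^{-1}(r,g_r(\theta))$ where $(r,\theta)=K(x)$, for $x\in[0,1]\times[0,\frac12)\setminus\{(\frac12,0)\}$; $\Psi_\delta(\frac12,0)=(\frac12,0)$; for $x_2>\frac12$, $\Psi_\delta(x_1,x_2)=(\Psi^1_\delta(x_1,1-x_2),\,1-\Psi^2_\delta(x_1,1-x_2))$ where $\Psi_\delta=(\Psi^1_\delta,\Psi^2_\delta)$; and on $x_2=\frac12$, $\Psi_\delta(x_1,\frac12)=((1+\delta)x_1,\frac12)$ for $x_1\le\frac12$ and $\Psi_\delta(x_1,\frac12)=(\frac{1+\delta}2+(1-\delta)(x_1-\frac12),\frac12)$ for $x_1\ge\frac12$. *)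

theory Defs
  imports "HOL-Analysis.Analysis"
begin

text \<open>All objects are parametrised by the fixed function h. Derivatives of h are
taken as deriv h (on the open interval (0,1/2) this is the genuine derivative).\<close>

definition r0 :: "(real \<Rightarrow> real) \<Rightarrow> real" where
  "r0 h = (THE r. 0 < r \<and> r < 1/2 \<and> 2 * r * h r + r\<^sup>2 = 1/4)"

definition Theta :: "(real \<Rightarrow> real) \<Rightarrow> real \<Rightarrow> real" where
  "Theta h r = (if r \<le> r0 h then arccos (h r / (h r + r))
                else arcsin (1 / (2 * (h r + r))))"

definition Kinv :: "(real \<Rightarrow> real) \<Rightarrow> real \<times> real \<Rightarrow> real \<times> real" where
  "Kinv h p = (case p of (r, \<theta>) \<Rightarrow>
      (1/2 + (r + h r) * sin (\<theta> * Theta h r),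
       (r + h r) * cos (\<theta> * Theta h r) - h r))"

definition K :: "(real \<Rightarrow> real) \<Rightarrow> real \<times> real \<Rightarrow> real \<times> real" where
  "K h x = (THE p. p \<in> {0<..<1/2} \<times> {-1..1} \<and> Kinv h p = x)"

definition wfun :: "(real \<Rightarrow> real) \<Rightarrow> real \<Rightarrow> real \<Rightarrow> real" where
  "wfun h r \<theta> = 1 + deriv h r - deriv h r * cos (\<theta> * Theta h r)"

definition gfun :: "(real \<Rightarrow> real) \<Rightarrow> real \<Rightarrow> real \<Rightarrow> real \<Rightarrow> real" where
  "gfun h \<delta> r l = (THE m. m \<in> {-1..1} \<and>
      (if l \<le> 0
       then (1 + \<delta>) * integral {-1..l} (wfun h r) = integral {-1..m} (wfun h r)
       else (1 - \<delta>) * integral {l..1} (wfun h r) = integral {m..1} (wfun h r)))"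

definition Psi_low :: "(real \<Rightarrow> real) \<Rightarrow> real \<Rightarrow> real \<times> real \<Rightarrow> real \<times> real" where
  "Psi_low h \<delta> x = (if x = (1/2, 0) then (1/2, 0)
      else (case K h x of (r, \<theta>) \<Rightarrow> Kinv h (r, gfun h \<delta> r \<theta>)))"

definition Psi :: "(real \<Rightarrow> real) \<Rightarrow> real \<Rightarrow> real \<times> real \<Rightarrow> real \<times> real" where
  "Psi h \<delta> x = (case x of (x1, x2) \<Rightarrow>
      if x2 = 1/2 then
        (if x1 \<le> 1/2 then ((1 + \<delta>) * x1, 1/2)
         else ((1 + \<delta>)/2 + (1 - \<delta>) * (x1 - 1/2), 1/2))
      else if x2 > 1/2 then
        (fst (Psi_low h \<delta> (x1, 1 - x2)), 1 - snd (Psi_low h \<delta> (x1, 1 - x2)))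
      else Psi_low h \<delta> (x1, x2))"

definition corners :: "(real \<times> real) set" where
  "corners = {(0,0), (0,1), (1,0), (1,1)}"

end

theory Submission
  imports Defs
begin


locale hs =
  fixes h h1 :: "real \<Rightarrow> real"
  assumes nonneg: "\<forall>r\<in>{0..<1/2}. h r \<ge> 0"
    and mono: "mono_on {0..<1/2} h"
    and zero: "\<forall>r\<in>{0..1/10}. h r = 0"
    and blowup: "filterlim h at_top (at_left (1/2))"
    and d1: "\<forall>r\<in>{0..<1/2}. (h has_real_derivative h1 r) (at r within {0..<1/2})"
    and O1: "\<exists>M. \<forall>r\<in>{0<..<1/2}. \<bar>(h1 r)\<^sup>2\<bar> \<le> M * (r + h r) ^ 3"
begin

lemma cont_h: "continuous_on {0..<1/2} h"
  by (rule DERIV_continuous_on) (use d1 in auto)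

lemma deriv_at: "0 < r \<Longrightarrow> r < 1/2 \<Longrightarrow> (h has_real_derivative h1 r) (at r)"
proof -
  assume r: "0 < r" "r < 1/2"
  have "r \<in> interior {0..<1/2::real}" using r by simp
  then have "at r within {0..<1/2} = at r" by (rule at_within_interior)
  moreover have "(h has_real_derivative h1 r) (at r within {0..<1/2})" using d1 r by auto
  ultimately show ?thesis by simp
qed

lemma deriv_eq: "0 < r \<Longrightarrow> r < 1/2 \<Longrightarrow> deriv h r = h1 r"
  using deriv_at DERIV_imp_deriv by blast

lemma h_mono: "0 \<le> a \<Longrightarrow> a \<le> b \<Longrightarrow> b < 1/2 \<Longrightarrow> h a \<le> h b"
  using mono by (auto simp: mono_on_def)

lemma h_nn: "0 \<le> a \<Longrightarrow> a < 1/2 \<Longrightarrow> 0 \<le> h a"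
  using nonneg by auto

lemma h1_nonneg:
  assumes r: "0 < r" "r < 1/2" shows "0 \<le> h1 r"
proof -
  have D: "(h has_real_derivative h1 r) (at r within {r<..})"
    using deriv_at[OF r] by (rule has_field_derivative_at_within)
  then have T: "((\<lambda>y. (h y - h r) / (y - r)) \<longlongrightarrow> h1 r) (at_right r)"
    by (simp add: has_field_derivative_iff)
  have "eventually (\<lambda>y. y \<in> {r<..<1/2}) (at_right r)"
    using r by (intro eventually_at_right_real) simp
  then have "eventually (\<lambda>y. 0 \<le> (h y - h r) / (y - r)) (at_right r)"
  proof (rule eventually_mono)
    fix y assume "y \<in> {r<..<1/2}"
    then have "h r \<le> h y" "y - r > 0" using h_mono[of r y] r by auto
    then show "0 \<le> (h y - h r) / (y - r)" by simp
  qed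
  then show ?thesis using T by (intro tendsto_lowerbound) auto
qed

definition q :: "real \<Rightarrow> real" where "q r = r\<^sup>2 + 2 * r * h r"

lemma q_strict: "0 \<le> a \<Longrightarrow> a < b \<Longrightarrow> b < 1/2 \<Longrightarrow> q a < q b"
proof -
  assume ab: "0 \<le> a" "a < b" "b < 1/2"
  have "h a \<le> h b" "0 \<le> h a" using h_mono[of a b] h_nn[of a] ab by auto
  then have "a * h a \<le> b * h b" using ab by (intro mult_mono) auto
  moreover have "a\<^sup>2 < b\<^sup>2" using ab by (intro power_strict_mono) auto
  ultimately show ?thesis unfolding q_def by linarith
qed

lemma cont_q: "continuous_on {0..<1/2} q"
  unfolding q_def by (intro continuous_intros cont_h)

lemma big_point: "\<exists>r. c < r \<and> r < 1/2 \<and> Z \<le> h r" if "c < 1/2"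
proof -
  have "eventually (\<lambda>r. Z \<le> h r) (at_left (1/2::real))"
    using blowup by (simp add: filterlim_at_top)
  moreover have "eventually (\<lambda>r. r \<in> {c<..<1/2}) (at_left (1/2::real))"
    using that by (rule eventually_at_left_real)
  ultimately have "eventually (\<lambda>r. c < r \<and> r < 1/2 \<and> Z \<le> h r) (at_left (1/2::real))"
    by eventually_elim auto
  then show ?thesis by (rule eventually_happens'[rotated]) simp
qed

lemma r0_ex: "\<exists>r. 0 < r \<and> r < 1/2 \<and> 2 * r * h r + r\<^sup>2 = 1/4"
proof -
  obtain b where b: "1/4 < b" "b < 1/2" "10 \<le> h b" using big_point[of "1/4" 10] by auto
  have "q (1/10) \<le> 1/4" using zero by (simp add: q_def power2_eq_square)
  moreover have "1/4 \<le> q b"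
  proof -
    have "2 * b * h b \<ge> 2 * (1/4) * 10" using b by (intro mult_mono) auto
    moreover have "0 \<le> b\<^sup>2" by simp
    ultimately show ?thesis unfolding q_def by linarith
  qed
  moreover have "continuous_on {1/10..b} q" using cont_q by (rule continuous_on_subset) (use b in auto)
  ultimately obtain r where "1/10 \<le> r" "r \<le> b" "q r = 1/4"
    using IVT'[of q "1/10" "1/4" b] b by auto
  then show ?thesis using b by (intro exI[of _ r]) (auto simp: q_def)
qed

lemma r0_props: "0 < r0 h" "r0 h < 1/2" "q (r0 h) = 1/4"
proof -
  have "0 < r0 h \<and> r0 h < 1/2 \<and> 2 * r0 h * h (r0 h) + (r0 h)\<^sup>2 = 1/4"
    unfolding r0_def
  proof (rule theI')
    show "\<exists>!r. 0 < r \<and> r < 1/2 \<and> 2 * r * h r + r\<^sup>2 = 1/4"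
    proof (rule ex_ex1I)
      show "\<exists>r. 0 < r \<and> r < 1/2 \<and> 2 * r * h r + r\<^sup>2 = 1/4" by (rule r0_ex)
    next
      fix x y assume x: "0 < x \<and> x < 1/2 \<and> 2 * x * h x + x\<^sup>2 = 1/4"
        and y: "0 < y \<and> y < 1/2 \<and> 2 * y * h y + y\<^sup>2 = 1/4"
      show "x = y"
      proof (rule ccontr)
        assume "x \<noteq> y"
        then have "x < y \<or> y < x" by auto
        then show False using q_strict[of x y] q_strict[of y x] x y by (auto simp: q_def)
      qed
    qed
  qed
  then show "0 < r0 h" "r0 h < 1/2" "q (r0 h) = 1/4" by (auto simp: q_def)
qed

lemma q_le: "0 \<le> r \<Longrightarrow> r \<le> r0 h \<Longrightarrow> q r \<le> 1/4"
  using q_strict[of r "r0 h"] r0_props by force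

lemma q_gt: "r0 h < r \<Longrightarrow> r < 1/2 \<Longrightarrow> 1/4 < q r"
  using q_strict[of "r0 h" r] r0_props by force

end


lemma jordan2:
  fixes x :: real assumes "0 \<le> x" "x \<le> pi/2" shows "x \<le> 2 * sin x"
proof (cases "x \<le> pi/3")
  case True
  have "(\<lambda>t. 2 * sin t - t) 0 \<le> (\<lambda>t. 2 * sin t - t) x"
  proof (rule DERIV_nonneg_imp_increasing_open[OF assms(1)])
    fix t assume t: "0 < t" "t < x"
    have "cos (pi/3) \<le> cos t"
      using t True by (intro cos_monotone_0_pi_le) auto
    then have "1/2 \<le> cos t" by (simp add: cos_60)
    show "\<exists>y. ((\<lambda>t. 2 * sin t - t) has_real_derivative y) (at t) \<and> 0 \<le> y"
      by (rule exI[of _ "2 * cos t - 1"]) (use \<open>1/2 \<le> cos t\<close> in \<open>auto intro!: derivative_eq_intros\<close>)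
  qed (intro continuous_intros)
  then show ?thesis by simp
next
  case False
  have "sin (pi/3) \<le> sin x"
    using False assms by (intro sin_monotone_2pi_le) auto
  then have "sqrt 3 / 2 \<le> sin x" by (simp add: sin_60)
  moreover have "1.7 \<le> sqrt (3::real)" by (rule real_le_rsqrt) (simp add: power2_eq_square)
  moreover have "pi \<le> 3.2" using pi_approx by simp
  ultimately show ?thesis using assms by simp
qed

lemma sin_cos_ge1:
  fixes x :: real assumes "0 \<le> x" "x \<le> pi/2" shows "1 \<le> sin x + cos x"
proof -
  have s: "0 \<le> sin x" "sin x \<le> 1" using assms by (auto intro!: sin_ge_zero)
  have c: "0 \<le> cos x" "cos x \<le> 1" using assms by (auto intro!: cos_ge_zero)
  have "(sin x)\<^sup>2 \<le> sin x" "(cos x)\<^sup>2 \<le> cos x"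
    using s c by (auto simp: power2_eq_square intro: mult_left_le_one_le)
  then show ?thesis using sin_cos_squared_add[of x] by linarith
qed

context hs begin

lemma Theta_lo:
  assumes r: "0 < r" "r \<le> r0 h"
  shows "(r + h r) * cos (Theta h r) = h r" "(r + h r) * sin (Theta h r) = sqrt (q r)"
        "0 < Theta h r" "Theta h r \<le> pi/2"
proof -
  have rl: "r < 1/2" using r r0_props by linarith
  have hn: "0 \<le> h r" using h_nn[of r] r rl by auto
  define y where "y = h r / (h r + r)"
  have y: "0 \<le> y" "y < 1" using hn r by (auto simp: y_def divide_simps)
  have T: "Theta h r = arccos y" using r by (simp add: Theta_def y_def)
  have "cos (Theta h r) = y" using y by (simp add: T)
  then show "(r + h r) * cos (Theta h r) = h r" using r hn by (simp add: y_def field_simps)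
  have "sqrt (q r) = (r + h r) * sqrt (1 - y\<^sup>2)"
  proof (rule real_sqrt_unique)
    have "((r + h r) * sqrt (1 - y\<^sup>2))\<^sup>2 = (r + h r)\<^sup>2 * (1 - y\<^sup>2)"
      using y power_le_one[of y 2] by (simp add: power_mult_distrib)
    also have "\<dots> = (r + h r)\<^sup>2 - (h r)\<^sup>2"
    proof -
      have nz: "h r + r \<noteq> 0" using r hn by simp
      have "(r + h r)\<^sup>2 * y\<^sup>2 = (h r)\<^sup>2" unfolding y_def using nz
        by (simp add: power_divide add.commute)
      then show ?thesis by (simp add: right_diff_distrib)
    qed
    also have "\<dots> = q r" by (simp add: q_def power2_eq_square algebra_simps)
    finally show "((r + h r) * sqrt (1 - y\<^sup>2))\<^sup>2 = q r" .
    show "0 \<le> (r + h r) * sqrt (1 - y\<^sup>2)" using r hn y power_le_one[of y 2] by simp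
  qed
  then show S: "(r + h r) * sin (Theta h r) = sqrt (q r)" using y by (simp add: T sin_arccos)
  have "0 < r\<^sup>2" "0 \<le> 2 * r * h r" using r hn by auto
  then have "0 < q r" unfolding q_def by linarith
  then have "sin (Theta h r) \<noteq> 0" using S by auto
  moreover have "0 \<le> Theta h r" using y by (simp add: T arccos_lbound)
  ultimately show "0 < Theta h r" by (metis less_eq_real_def sin_zero)
  show "Theta h r \<le> pi/2" using y arccos_le_pi2[of y] by (simp add: T)
qed

lemma Theta_hi:
  assumes r: "r0 h < r" "r < 1/2"
  shows "(r + h r) * sin (Theta h r) = 1/2" "(r + h r) * cos (Theta h r) = sqrt ((r + h r)\<^sup>2 - 1/4)"
        "0 < Theta h r" "Theta h r \<le> pi/2" "h r \<le> sqrt ((r + h r)\<^sup>2 - 1/4)"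
        "r + h r \<le> sqrt ((r + h r)\<^sup>2 - 1/4) + 1/2"
proof -
  have r0p: "0 < r" using r r0_props by linarith
  have hn: "0 \<le> h r" using h_nn[of r] r0p r by auto
  have qg: "1/4 < q r" using q_gt r by auto
  have R2: "(r + h r)\<^sup>2 = q r + (h r)\<^sup>2" by (simp add: q_def power2_eq_square algebra_simps)
  have R12: "1/2 < r + h r"
  proof -
    have "(1/2)\<^sup>2 < (r + h r)\<^sup>2" using R2 qg by (simp add: power2_eq_square) (smt (verit) zero_le_square hn)
    then show ?thesis using r0p hn by (smt (verit) power_mono)
  qed
  define y where "y = 1 / (2 * (h r + r))"
  have y: "0 < y" "y < 1" using R12 by (auto simp: y_def divide_simps)
  have T: "Theta h r = arcsin y" using r by (simp add: Theta_def y_def)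
  have "sin (Theta h r) = y" using y by (simp add: T)
  then show S: "(r + h r) * sin (Theta h r) = 1/2" using R12 by (simp add: y_def field_simps)
  have "sqrt ((r + h r)\<^sup>2 - 1/4) = (r + h r) * sqrt (1 - y\<^sup>2)"
  proof (rule real_sqrt_unique)
    have "((r + h r) * sqrt (1 - y\<^sup>2))\<^sup>2 = (r + h r)\<^sup>2 * (1 - y\<^sup>2)"
      using y power_le_one[of y 2] by (simp add: power_mult_distrib)
    also have "\<dots> = (r + h r)\<^sup>2 - 1/4"
    proof -
      have nz: "h r + r \<noteq> 0" using R12 by simp
      have "y * (r + h r) = 1/2" unfolding y_def using nz by (simp add: field_simps)
      then have "(y * (r + h r))\<^sup>2 = (1/2)\<^sup>2" by simp
      then have "(y * (r + h r))\<^sup>2 = 1/4" by (simp add: power2_eq_square)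
      then have "(r + h r)\<^sup>2 * y\<^sup>2 = 1/4" by (simp add: power_mult_distrib mult.commute)
      then show ?thesis by (simp add: right_diff_distrib)
    qed
    finally show "((r + h r) * sqrt (1 - y\<^sup>2))\<^sup>2 = (r + h r)\<^sup>2 - 1/4" .
    show "0 \<le> (r + h r) * sqrt (1 - y\<^sup>2)" using R12 y power_le_one[of y 2] by simp
  qed
  then show "(r + h r) * cos (Theta h r) = sqrt ((r + h r)\<^sup>2 - 1/4)" using y by (simp add: T cos_arcsin)
  show "0 < Theta h r" using y by (simp add: T arcsin_less_mono[of 0 y, simplified])
  show "Theta h r \<le> pi/2" using y arcsin_ubound[of y] by (simp add: T)
  show "h r \<le> sqrt ((r + h r)\<^sup>2 - 1/4)"
    by (rule real_le_rsqrt) (use R2 qg in \<open>simp\<close>)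
  show "r + h r \<le> sqrt ((r + h r)\<^sup>2 - 1/4) + 1/2"
  proof -
    have "(r + h r) - 1/2 \<le> sqrt ((r + h r)\<^sup>2 - 1/4)"
      by (rule real_le_rsqrt) (use R12 in \<open>simp add: power2_eq_square algebra_simps\<close>)
    then show ?thesis by simp
  qed
qed

lemma Theta_pos: "0 < r \<Longrightarrow> r < 1/2 \<Longrightarrow> 0 < Theta h r \<and> Theta h r \<le> pi/2"
  using Theta_lo[of r] Theta_hi[of r] by (cases "r \<le> r0 h") auto

end


lemma norm_pair_ge1: "(a::real) \<le> norm (a, b)"
  by (simp add: norm_Pair)
lemma norm_pair_ge2: "(b::real) \<le> norm (a, b)"
  by (simp add: norm_Pair)
lemma norm_pair_le: "norm ((a::real), (b::real)) \<le> \<bar>a\<bar> + \<bar>b\<bar>"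
  by (simp add: norm_Pair sqrt_sum_squares_le_sum_abs)

lemma le_1_sq: "(x::real) \<le> 1 + x\<^sup>2"
proof -
  have "0 \<le> (x - 1/2)\<^sup>2" by simp
  also have "(x - 1/2)\<^sup>2 = x\<^sup>2 - x + 1/4" by (simp add: power2_eq_square algebra_simps)
  finally show ?thesis by linarith
qed

lemma sin_lip: "\<bar>sin (u::real) - sin v\<bar> \<le> \<bar>u - v\<bar>"
proof -
  have "\<bar>sin u - sin v\<bar> = 2 * \<bar>sin ((u - v) / 2)\<bar> * \<bar>cos ((u + v) / 2)\<bar>"
    by (simp add: sin_diff_sin abs_mult)
  also have "\<dots> \<le> 2 * \<bar>(u - v) / 2\<bar> * 1"
    by (intro mult_mono abs_sin_x_le_abs_x) auto
  finally show ?thesis by simp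
qed

lemma cos_lip: "\<bar>cos (u::real) - cos v\<bar> \<le> \<bar>u - v\<bar>"
proof -
  have "\<bar>cos u - cos v\<bar> = 2 * \<bar>sin ((u + v) / 2)\<bar> * \<bar>sin ((v - u) / 2)\<bar>"
    by (simp add: cos_diff_cos abs_mult)
  also have "\<dots> \<le> 2 * 1 * \<bar>(v - u) / 2\<bar>"
    by (intro mult_mono abs_sin_x_le_abs_x) auto
  finally show ?thesis by simp
qed

context hs begin

lemma Kinv_diff:
  assumes "0 < r" "r < 1/2"
  shows "norm (Kinv h (r, a) - Kinv h (r, b)) \<le> 2 * (r + h r) * Theta h r * \<bar>a - b\<bar>"
proof -
  define R where "R = r + h r"
  define T where "T = Theta h r"
  have R: "0 \<le> R" using assms h_nn[of r] by (simp add: R_def)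
  have T: "0 \<le> T" using Theta_pos[OF assms] by (simp add: T_def)
  have "Kinv h (r, a) - Kinv h (r, b) = (R * (sin (a*T) - sin (b*T)), R * (cos (a*T) - cos (b*T)))"
    by (simp add: Kinv_def R_def T_def algebra_simps)
  then have "norm (Kinv h (r, a) - Kinv h (r, b)) \<le> \<bar>R * (sin (a*T) - sin (b*T))\<bar> + \<bar>R * (cos (a*T) - cos (b*T))\<bar>"
    using norm_pair_le by simp
  also have "\<dots> = R * \<bar>sin (a*T) - sin (b*T)\<bar> + R * \<bar>cos (a*T) - cos (b*T)\<bar>"
    using R by (simp add: abs_mult)
  also have "\<dots> \<le> R * \<bar>a*T - b*T\<bar> + R * \<bar>a*T - b*T\<bar>"
    by (intro add_mono mult_left_mono sin_lip cos_lip R)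
  also have "\<bar>a*T - b*T\<bar> = T * \<bar>a - b\<bar>" using T by (simp add: left_diff_distrib[symmetric] abs_mult)
  also have "R * (T * \<bar>a - b\<bar>) + R * (T * \<bar>a - b\<bar>) = 2 * (r + h r) * Theta h r * \<bar>a - b\<bar>"
    by (simp add: R_def T_def algebra_simps)
  finally show ?thesis .
qed

lemma geom:
  assumes r: "0 < r" "r < 1/2" and t: "-1 \<le> t" "t \<le> 0"
  shows "(r + h r) * sin (Theta h r * (1 + t)) \<le> 3 * norm (Kinv h (r, t))"
proof -
  define R where "R = r + h r"
  define T where "T = Theta h r"
  define p where "p = T * (1 + t)"
  have hn: "0 \<le> h r" using h_nn[of r] r by auto
  have T: "0 < T" "T \<le> pi/2" using Theta_pos[OF r] by (auto simp: T_def)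
  have p: "0 \<le> p" "p \<le> T" using T t by (auto simp: p_def mult_le_cancel_left1)
  then have pp: "p \<le> pi/2" using T by linarith
  have sp: "0 \<le> sin p" "sin p \<le> 1" using p pp by (auto intro!: sin_ge_zero)
  have cp: "0 \<le> cos p" "cos p \<le> 1" using p pp by (auto intro!: cos_ge_zero)
  have sc: "1 \<le> sin p + cos p" using sin_cos_ge1 p pp by auto
  have tT: "t * T = p - T" by (simp add: p_def algebra_simps)
  define x1 where "x1 = 1/2 + sin p * (R * cos T) - cos p * (R * sin T)"
  define x2 where "x2 = cos p * (R * cos T) + sin p * (R * sin T) - h r"
  have K0: "Kinv h (r, t) = (1/2 + R * sin (t*T), R * cos (t*T) - h r)"
    by (simp add: Kinv_def R_def T_def)
  have K: "Kinv h (r, t) = (x1, x2)"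
    unfolding K0 tT by (simp add: x1_def x2_def sin_diff cos_diff algebra_simps)
  have n1: "x1 \<le> norm (Kinv h (r, t))" and n2: "x2 \<le> norm (Kinv h (r, t))"
    unfolding K by (rule norm_pair_ge1, rule norm_pair_ge2)
  show ?thesis
  proof (cases "r \<le> r0 h")
    case True
    note L = Theta_lo[OF r(1) True, folded R_def T_def]
    define S where "S = sqrt (q r)"
    have qle: "q r \<le> 1/4" using q_le[of r] True r by auto
    have S1: "S \<le> 1/2" unfolding S_def using qle
      by (metis real_sqrt_four real_sqrt_le_mono real_sqrt_divide real_sqrt_one)
    have S0: "r \<le> S" unfolding S_def
      by (rule real_le_rsqrt) (use r hn in \<open>simp add: q_def\<close>)
    have "cos p * S \<le> 1 * S" using cp(2) S0 r by (intro mult_right_mono) auto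
    then have a: "cos p * S \<le> 1/2" using S1 by linarith
    have b: "h r \<le> h r * (sin p + cos p)" using sc hn by (simp add: mult_le_cancel_left1)
    have c: "r * sin p \<le> S * sin p" using S0 sp(1) by (rule mult_right_mono)
    have x1b: "h r * sin p \<le> x1" unfolding x1_def L(1) S_def[symmetric] L(2)[folded S_def] using a by (simp add: algebra_simps)
    have "S * sin p \<le> x1 + x2" unfolding x1_def x2_def L(1) L(2)[folded S_def] using a b by (simp add: algebra_simps)
    then have "R * sin p \<le> x1 + (x1 + x2)" using x1b c by (simp add: R_def algebra_simps)
    then show ?thesis using n1 n2 by (simp add: R_def T_def p_def mult.commute)
  next
    case False
    then have r0r: "r0 h < r" by simp
    note L = Theta_hi[OF r0r r(2), folded R_def T_def]
    define c where "c = sqrt (R\<^sup>2 - 1/4)"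
    have c0: "0 \<le> c" using L(5) hn unfolding c_def by linarith
    have a: "cos p * (1/2) \<le> 1/2" using cp by simp
    have b: "c \<le> c * (sin p + cos p)" using sc c0 by (simp add: mult_le_cancel_left1)
    have x1b: "c * sin p \<le> x1" unfolding x1_def L(1) L(2)[folded c_def] using a by (simp add: algebra_simps)
    have "(1/2) * sin p \<le> x1 + x2" unfolding x1_def x2_def L(1) L(2)[folded c_def]
      using a b L(5)[folded c_def] by (simp add: algebra_simps, insert cos_le_one[of p], linarith)
    moreover have "R * sin p \<le> c * sin p + (1/2) * sin p" using L(6)[folded c_def] sp
      by (metis distrib_right mult_right_mono)
    ultimately have "R * sin p \<le> x1 + (x1 + x2)" using x1b by linarith
    then show ?thesis using n1 n2 by (simp add: R_def T_def p_def mult.commute)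
  qed
qed

lemma W_bound: "\<exists>Wm\<ge>1. \<forall>r\<in>{0<..<1/2}. 1 + h1 r * (1 - cos (Theta h r)) \<le> Wm"
proof -
  obtain M where M0: "\<forall>r\<in>{0<..<1/2}. \<bar>(h1 r)\<^sup>2\<bar> \<le> M * (r + h r) ^ 3" using O1 by blast
  have M: "\<And>r. r\<in>{0<..<1/2} \<Longrightarrow> \<bar>(h1 r)\<^sup>2\<bar> \<le> M * (r + h r) ^ 3" using M0 by blast
  define B where "B = 1/2 + h (r0 h)"
  define Wm where "Wm = 3 + \<bar>M\<bar> * B^3 + \<bar>M\<bar> / r0 h"
  have r0: "0 < r0 h" "r0 h < 1/2" using r0_props by auto
  have B0: "0 \<le> B" using h_nn[of "r0 h"] r0 by (simp add: B_def)
  have "\<forall>r\<in>{0<..<1/2}. 1 + h1 r * (1 - cos (Theta h r)) \<le> Wm"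
  proof
    fix r :: real assume r: "r \<in> {0<..<1/2}"
    then have r1: "0 < r" "r < 1/2" by auto
    have hn: "0 \<le> h r" using h_nn[of r] r1 by auto
    have h1n: "0 \<le> h1 r" using h1_nonneg r1 by auto
    have Mr: "(h1 r)\<^sup>2 \<le> M * (r + h r) ^ 3" using M[OF r] by simp
    have u1: "h1 r \<le> 1 + (h1 r)\<^sup>2" by (rule le_1_sq)
    have extra: "0 \<le> \<bar>M\<bar> * B^3" "0 \<le> \<bar>M\<bar> / r0 h" using B0 r0 by auto
    show "1 + h1 r * (1 - cos (Theta h r)) \<le> Wm"
    proof (cases "r \<le> r0 h")
      case True
      note L = Theta_lo[OF r1(1) True]
      have cT: "0 \<le> cos (Theta h r)" using L by (intro cos_ge_zero) auto
      have A1: "h1 r * (1 - cos (Theta h r)) \<le> h1 r * 1" using cT h1n by (intro mult_left_mono) auto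
      have "r + h r \<le> B" using h_mono[of r "r0 h"] True r1 r0 by (simp add: B_def)
      then have "(r + h r)^3 \<le> B^3" using r1 hn by (intro power_mono) auto
      then have A2: "\<bar>M\<bar> * (r + h r)^3 \<le> \<bar>M\<bar> * B^3" by (intro mult_left_mono) auto
      have A3: "M * (r + h r)^3 \<le> \<bar>M\<bar> * (r + h r)^3"
        using r1 hn by (intro mult_right_mono) auto
      show ?thesis using A1 A2 A3 u1 Mr extra unfolding Wm_def by linarith
    next
      case False
      then have r0r: "r0 h < r" by simp
      note L = Theta_hi[OF r0r r1(2)]
      define R where "R = r + h r"
      have R0: "r0 h < R" using r0r hn by (simp add: R_def)
      have Rp: "0 < R" using R0 r0 by linarith
      have cT: "0 \<le> cos (Theta h r)" "cos (Theta h r) \<le> 1" using L by (auto intro!: cos_ge_zero)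
      have sT: "sin (Theta h r) = 1 / (2 * R)" using L(1) Rp by (simp add: R_def field_simps)
      have "cos (Theta h r) * cos (Theta h r) \<le> 1 * cos (Theta h r)"
        using cT by (intro mult_right_mono) auto
      then have "1 - cos (Theta h r) \<le> (sin (Theta h r))\<^sup>2"
        using sin_cos_squared_add[of "Theta h r"] by (simp add: power2_eq_square)
      then have "1 - cos (Theta h r) \<le> 1 / (4 * R\<^sup>2)" using sT by (simp add: power_divide power_mult_distrib)
      then have a: "h1 r * (1 - cos (Theta h r)) \<le> h1 r * (1 / (4 * R\<^sup>2))" using h1n by (rule mult_left_mono)
      define u where "u = h1 r / R\<^sup>2"
      have a': "h1 r * (1 / (4 * R\<^sup>2)) = u / 4" by (simp add: u_def)
      have "u * R\<^sup>2 = h1 r" using Rp by (simp add: u_def)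
      then have "(u * R\<^sup>2)\<^sup>2 = (h1 r)\<^sup>2" by simp
      moreover have "(u * R\<^sup>2)\<^sup>2 = u\<^sup>2 * R^4" by (simp add: power_mult_distrib flip: power_mult)
      ultimately have "u\<^sup>2 * R^4 = (h1 r)\<^sup>2" by simp
      then have "u\<^sup>2 * R^4 \<le> M * R^3" using Mr by (simp add: R_def)
      moreover have "R^4 = R * R^3" "M * R^3 = M * R^3" by (simp_all add: power3_eq_cube power4_eq_xxxx)
      ultimately have "(u\<^sup>2 * R) * R^3 \<le> M * R^3" by (simp add: mult.assoc)
      then have "u\<^sup>2 * R \<le> M" using Rp by simp
      then have "u\<^sup>2 \<le> M / R" using Rp by (simp add: field_simps)
      also have "M / R \<le> \<bar>M\<bar> / R" using Rp by (intro divide_right_mono) auto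
      also have "\<bar>M\<bar> / R \<le> \<bar>M\<bar> / r0 h" using Rp R0 r0 by (intro divide_left_mono) auto
      finally have "u\<^sup>2 \<le> \<bar>M\<bar> / r0 h" .
      moreover have "u \<le> 1 + u\<^sup>2" by (rule le_1_sq)
      ultimately show ?thesis using a a' extra unfolding Wm_def by linarith
    qed
  qed
  moreover have "1 \<le> Wm" using B0 r0 unfolding Wm_def by (simp add: add_increasing)
  ultimately show ?thesis by blast
qed

end


lemma abs_inv:
  fixes F :: "real \<Rightarrow> real"
  assumes cont: "continuous_on {-1..1} F"
    and inc: "\<And>a b. -1 \<le> a \<Longrightarrow> a \<le> b \<Longrightarrow> b \<le> 1 \<Longrightarrow> b - a \<le> F b - F a"
    and y: "F (-1) \<le> y" "y \<le> F 1"
  shows "\<exists>!m. m \<in> {-1..1} \<and> F m = y"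
proof (rule ex_ex1I)
  show "\<exists>m. m \<in> {-1..1} \<and> F m = y"
    using IVT'[of F "-1" y 1] y cont by auto
next
  fix m m' assume m: "m \<in> {-1..1} \<and> F m = y" and m': "m' \<in> {-1..1} \<and> F m' = y"
  show "m = m'"
  proof (rule ccontr)
    assume "m \<noteq> m'"
    then have "m < m' \<or> m' < m" by auto
    then show False using inc[of m m'] inc[of m' m] m m' by auto
  qed
qed

context hs begin

lemma w_props:
  assumes r: "0 < r" "r < 1/2" and th: "-1 \<le> th" "th \<le> 1"
  shows "1 \<le> wfun h r th" "wfun h r th \<le> 1 + h1 r * (1 - cos (Theta h r))"
proof -
  have h1n: "0 \<le> h1 r" using h1_nonneg r by auto
  have T: "0 < Theta h r" "Theta h r \<le> pi/2" using Theta_pos[OF r] by auto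
  have W: "wfun h r th = 1 + h1 r * (1 - cos (th * Theta h r))"
    by (simp add: wfun_def deriv_eq[OF r] algebra_simps)
  have "0 \<le> h1 r * (1 - cos (th * Theta h r))" using h1n by simp
  then show "1 \<le> wfun h r th" using W by simp
  have "cos (Theta h r) \<le> cos (\<bar>th\<bar> * Theta h r)"
    using T th by (intro cos_monotone_0_pi_le) (auto simp: mult_le_cancel_right1 abs_le_iff)
  also have "cos (\<bar>th\<bar> * Theta h r) = cos (th * Theta h r)"
    by (cases "th \<ge> 0") auto
  finally have "1 - cos (th * Theta h r) \<le> 1 - cos (Theta h r)" by simp
  then have "h1 r * (1 - cos (th * Theta h r)) \<le> h1 r * (1 - cos (Theta h r))"
    using h1n by (rule mult_left_mono)
  then show "wfun h r th \<le> 1 + h1 r * (1 - cos (Theta h r))" using W by simp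
qed

lemma w_cont: "continuous_on S (wfun h r)"
  unfolding wfun_def by (intro continuous_intros)

lemma w_int: "wfun h r integrable_on {a..b}"
  by (rule integrable_continuous_interval) (rule w_cont)

lemma w_even: "wfun h r (- x) = wfun h r x"
  by (simp add: wfun_def)

lemma int_bounds:
  assumes r: "0 < r" "r < 1/2" and ab: "-1 \<le> a" "a \<le> b" "b \<le> 1"
  shows "b - a \<le> integral {a..b} (wfun h r)"
        "integral {a..b} (wfun h r) \<le> (1 + h1 r * (1 - cos (Theta h r))) * (b - a)"
proof -
  have "integral {a..b} (\<lambda>_. 1::real) \<le> integral {a..b} (wfun h r)"
    by (rule integral_le) (use w_props[OF r] ab in \<open>auto intro: w_int\<close>)
  then show "b - a \<le> integral {a..b} (wfun h r)" using ab by (simp add: content_real)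
  have "integral {a..b} (wfun h r) \<le> integral {a..b} (\<lambda>_. 1 + h1 r * (1 - cos (Theta h r)))"
    by (rule integral_le) (use w_props[OF r] ab in \<open>auto intro: w_int\<close>)
  then show "integral {a..b} (wfun h r) \<le> (1 + h1 r * (1 - cos (Theta h r))) * (b - a)"
    using ab by (simp add: content_real mult.commute)
qed

lemma int_split:
  assumes "a \<le> c" "c \<le> b"
  shows "integral {a..b} (wfun h r) = integral {a..c} (wfun h r) + integral {c..b} (wfun h r)"
  using Henstock_Kurzweil_Integration.integral_combine[OF assms w_int] by simp

lemma int_sym: "integral {-1..0} (wfun h r) = integral {0..1} (wfun h r)"
proof -
  have "integral {-1..-0} (\<lambda>x. wfun h r (-x)) = integral {0..1} (wfun h r)"
    by (rule Henstock_Kurzweil_Integration.integral_reflect_real)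
  then show ?thesis by (simp add: w_even)
qed

lemma g_props:
  assumes r: "0 < r" "r < 1/2" and d: "-1 < \<delta>" "\<delta> < 1" and l: "-1 \<le> l" "l \<le> 1"
  shows "gfun h \<delta> r l \<in> {-1..1}"
        "\<bar>gfun h \<delta> r l - l\<bar> \<le> \<bar>\<delta>\<bar> * (1 + h1 r * (1 - cos (Theta h r))) * (if l \<le> 0 then 1 + l else 1 - l)"
proof -
  define w where "w = wfun h r"
  define W where "W = 1 + h1 r * (1 - cos (Theta h r))"
  define F where "F t = integral {-1..t} w" for t
  have Fd: "F b - F a = integral {a..b} w" if "-1 \<le> a" "a \<le> b" for a b
    using int_split[of "-1" a b r] that by (simp add: F_def w_def)
  have inc: "b - a \<le> F b - F a" if "-1 \<le> a" "a \<le> b" "b \<le> 1" for a b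
    using Fd[of a b] int_bounds(1)[OF r, of a b] that by (simp add: w_def)
  have incW: "F b - F a \<le> W * (b - a)" if "-1 \<le> a" "a \<le> b" "b \<le> 1" for a b
    using Fd[of a b] int_bounds(2)[OF r, of a b] that by (simp add: w_def W_def)
  have Fm1: "F (-1) = 0" by (simp add: F_def)
  have F1: "F 1 = 2 * F 0"
    using Fd[of 0 1] int_sym[of r] by (simp add: F_def w_def)
  have cont: "continuous_on {-1..1} F"
    unfolding F_def w_def by (rule indefinite_integral_continuous_1) (rule w_int)
  have I1: "integral {t..1} w = F 1 - F t" if "-1 \<le> t" "t \<le> 1" for t
    using Fd[of t 1] that by simp
  define y where "y = (if l \<le> 0 then (1 + \<delta>) * F l else F 1 - (1 - \<delta>) * (F 1 - F l))"
  have P: "(m \<in> {-1..1} \<and> (if l \<le> 0 then (1 + \<delta>) * integral {-1..l} w = integral {-1..m} w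
            else (1 - \<delta>) * integral {l..1} w = integral {m..1} w)) \<longleftrightarrow> (m \<in> {-1..1} \<and> F m = y)" for m
    using I1[of l] I1[of m] l by (auto simp: y_def F_def)
  have g: "gfun h \<delta> r l = (THE m. m \<in> {-1..1} \<and> F m = y)"
    unfolding gfun_def w_def[symmetric] P ..
  have Fl0: "0 \<le> F l" using inc[of "-1" l] l Fm1 by simp
  have FlW: "F l \<le> W * (1 + l)" using incW[of "-1" l] l Fm1 by (simp add: add.commute)
  have F1l: "0 \<le> F 1 - F l" using inc[of l 1] l by simp
  have F1lW: "F 1 - F l \<le> W * (1 - l)" using incW[of l 1] l by simp
  have yr: "F (-1) \<le> y \<and> y \<le> F 1"
  proof (cases "l \<le> 0")
    case True
    have "F l \<le> F 0" using inc[of l 0] True l by simp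
    moreover have "(1 + \<delta>) * F l \<le> 2 * F l" using d Fl0 by (intro mult_right_mono) auto
    ultimately have "(1 + \<delta>) * F l \<le> 2 * F 0" by linarith
    then show ?thesis using True d Fl0 F1 Fm1 by (simp add: y_def)
  next
    case False
    have "F 0 \<le> F l" using inc[of 0 l] False l by simp
    moreover have "(1 - \<delta>) * (F 1 - F l) \<le> 2 * (F 1 - F l)" using d F1l by (intro mult_right_mono) auto
    ultimately have "(1 - \<delta>) * (F 1 - F l) \<le> 2 * (F 1 - F 0)" unfolding right_diff_distrib left_diff_distrib by linarith
    moreover have "0 \<le> (1 - \<delta>) * (F 1 - F l)" using d F1l by simp
    ultimately show ?thesis using False F1 Fm1 by (simp add: y_def)
  qed
  have ex: "\<exists>!m. m \<in> {-1..1} \<and> F m = y"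
    by (rule abs_inv[OF cont inc]) (use yr in auto)
  have gm: "gfun h \<delta> r l \<in> {-1..1} \<and> F (gfun h \<delta> r l) = y"
    unfolding g using theI'[OF ex] .
  then show "gfun h \<delta> r l \<in> {-1..1}" by simp
  define m where "m = gfun h \<delta> r l"
  have m: "m \<in> {-1..1}" "F m = y" using gm by (auto simp: m_def)
  have dist: "\<bar>m - l\<bar> \<le> \<bar>F m - F l\<bar>"
  proof (cases "l \<le> m")
    case True then show ?thesis using inc[of l m] l m by auto
  next
    case False then show ?thesis using inc[of m l] l m by auto
  qed
  have W0: "0 \<le> W" using w_props(1)[OF r, of 0] w_props(2)[OF r, of 0] by (simp add: W_def)
  show "\<bar>gfun h \<delta> r l - l\<bar> \<le> \<bar>\<delta>\<bar> * (1 + h1 r * (1 - cos (Theta h r))) * (if l \<le> 0 then 1 + l else 1 - l)"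
  proof (cases "l \<le> 0")
    case True
    then have "F m - F l = \<delta> * F l" using m by (simp add: y_def algebra_simps)
    then have "\<bar>F m - F l\<bar> = \<bar>\<delta>\<bar> * F l" using Fl0 by (simp add: abs_mult)
    also have "\<dots> \<le> \<bar>\<delta>\<bar> * (W * (1 + l))" using FlW by (intro mult_left_mono) auto
    finally show ?thesis using dist True by (simp add: m_def W_def mult.assoc)
  next
    case False
    then have "F m - F l = \<delta> * (F 1 - F l)" using m by (simp add: y_def algebra_simps)
    then have "\<bar>F m - F l\<bar> = \<bar>\<delta>\<bar> * (F 1 - F l)" using F1l by (simp add: abs_mult)
    also have "\<dots> \<le> \<bar>\<delta>\<bar> * (W * (1 - l))" using F1lW by (intro mult_left_mono) auto
    finally show ?thesis using dist False by (simp add: m_def W_def mult.assoc)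
  qed
qed

end


context hs begin

definition fK :: "real \<Rightarrow> real \<Rightarrow> real \<Rightarrow> real" where
  "fK a y2 r = (r + h r)\<^sup>2 - (y2 + h r)\<^sup>2 - a\<^sup>2"

lemma fK_strict:
  assumes "0 \<le> y2" "y2 \<le> r" "r < r'" "r' < 1/2"
  shows "fK a y2 r < fK a y2 r'"
proof -
  have e: "fK a y2 s = s\<^sup>2 - y2\<^sup>2 + 2 * h s * (s - y2) - a\<^sup>2" for s
    by (simp add: fK_def power2_eq_square algebra_simps)
  have hh: "h r \<le> h r'" "0 \<le> h r" using h_mono[of r r'] h_nn[of r] assms by auto
  have "h r * (r - y2) \<le> h r' * (r' - y2)" using hh assms by (intro mult_mono) auto
  moreover have "r\<^sup>2 < r'\<^sup>2" using assms by (intro power_strict_mono) auto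
  ultimately show ?thesis unfolding e by linarith
qed

lemma Kinv_fK:
  assumes "Kinv h (r, th) = (y1, y2)" "0 < r" "r < 1/2"
  shows "fK (y1 - 1/2) y2 r = 0" "y2 \<le> r" "y1 - 1/2 = (r + h r) * sin (th * Theta h r)"
proof -
  have e1: "y1 - 1/2 = (r + h r) * sin (th * Theta h r)"
   and e2: "y2 + h r = (r + h r) * cos (th * Theta h r)"
    using assms by (auto simp: Kinv_def)
  then show "y1 - 1/2 = (r + h r) * sin (th * Theta h r)" by simp
  have "(y1 - 1/2)\<^sup>2 + (y2 + h r)\<^sup>2 = (r + h r)\<^sup>2 * ((sin (th * Theta h r))\<^sup>2 + (cos (th * Theta h r))\<^sup>2)"
    unfolding e1 e2 by (simp only: power_mult_distrib distrib_left)
  then show "fK (y1 - 1/2) y2 r = 0" by (simp add: fK_def)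
  have R: "0 \<le> r + h r" using h_nn[of r] assms by auto
  have "(r + h r) * cos (th * Theta h r) \<le> (r + h r) * 1" using R by (intro mult_left_mono) auto
  then show "y2 \<le> r" using e2 by simp
qed

lemma K_unique:
  assumes A: "Kinv h (r, th) = (y1, y2)" "r \<in> {0<..<1/2}" "th \<in> {-1..1}"
      and B: "Kinv h (r', th') = (y1, y2)" "r' \<in> {0<..<1/2}" "th' \<in> {-1..1}"
      and y2: "0 \<le> y2"
  shows "r = r' \<and> th = th'"
proof -
  note a = Kinv_fK[OF A(1)] and b = Kinv_fK[OF B(1)]
  have rr: "r = r'"
  proof (rule ccontr)
    assume "r \<noteq> r'"
    then have "r < r' \<or> r' < r" by auto
    then show False
      using fK_strict[of y2 r r' "y1 - 1/2"] fK_strict[of y2 r' r "y1 - 1/2"] a b A B y2 by auto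
  qed
  have T: "0 < Theta h r" "Theta h r \<le> pi/2" using Theta_pos A(2) by auto
  have R: "0 < r + h r" using h_nn[of r] A(2) by auto
  have s: "sin (th * Theta h r) = sin (th' * Theta h r)"
    using a(3) b(3) R A(2) B(2) rr by auto
  have bd: "- (pi/2) \<le> t * Theta h r \<and> t * Theta h r \<le> pi/2" if "t \<in> {-1..1}" for t
  proof -
    have "\<bar>t\<bar> * Theta h r \<le> 1 * Theta h r" using that T by (intro mult_right_mono) auto
    moreover have "\<bar>t * Theta h r\<bar> = \<bar>t\<bar> * Theta h r" using T by (simp add: abs_mult)
    ultimately have "\<bar>t * Theta h r\<bar> \<le> pi/2" using T by linarith
    moreover have "t * Theta h r \<le> \<bar>t * Theta h r\<bar>" "- (t * Theta h r) \<le> \<bar>t * Theta h r\<bar>" by auto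
    ultimately show ?thesis by linarith
  qed
  have "th * Theta h r = th' * Theta h r"
    using arcsin_sin[of "th * Theta h r"] arcsin_sin[of "th' * Theta h r"] bd[OF A(3)] bd[OF B(3)] s by auto
  then have "th = th'" using T by simp
  then show ?thesis using rr by simp
qed

lemma K_exists:
  assumes y: "0 \<le> y1" "y1 \<le> 1" "0 \<le> y2" "y2 < 1/2" "(y1, y2) \<noteq> (1/2, 0)"
  shows "\<exists>r th. r \<in> {0<..<1/2} \<and> th \<in> {-1..1} \<and> Kinv h (r, th) = (y1, y2)"
proof -
  define a where "a = y1 - 1/2"
  have a: "\<bar>a\<bar> \<le> 1/2" using y(1) y(2) unfolding a_def abs_le_iff by linarith
  have pos: "0 < y2\<^sup>2 + a\<^sup>2"
  proof -
    have "y2 \<noteq> 0 \<or> a \<noteq> 0" using y by (auto simp: a_def)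
    then show ?thesis by (auto simp: add_pos_nonneg add_nonneg_pos)
  qed
  define r1 where "r1 = min (1/10) (sqrt (y2\<^sup>2 + a\<^sup>2) / 2)"
  have r1: "0 < r1" "r1 \<le> 1/10" using pos by (auto simp: r1_def)
  have "r1 \<le> sqrt (y2\<^sup>2 + a\<^sup>2) / 2" unfolding r1_def by (rule min.cobounded2)
  then have "r1\<^sup>2 \<le> (sqrt (y2\<^sup>2 + a\<^sup>2) / 2)\<^sup>2" using r1(1) by (intro power_mono) auto
  also have "\<dots> = (y2\<^sup>2 + a\<^sup>2) / 4" using pos by (simp add: power_divide)
  moreover have "(y2\<^sup>2 + a\<^sup>2) / 4 < y2\<^sup>2 + a\<^sup>2" using pos by simp
  ultimately have "r1\<^sup>2 < y2\<^sup>2 + a\<^sup>2" by linarith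
  moreover have "h r1 = 0" using zero r1 by auto
  ultimately have f1: "fK a y2 r1 < 0" by (simp add: fK_def)
  define Z where "Z = (a\<^sup>2 + 1) / (1/2 - y2)"
  obtain r2 where r2: "max r1 ((1/2 + y2)/2) < r2" "r2 < 1/2" "Z \<le> h r2"
    using big_point[of "max r1 ((1/2 + y2)/2)" Z] y r1 by auto
  have f2: "0 < fK a y2 r2"
  proof -
    have e: "fK a y2 r2 = r2\<^sup>2 - y2\<^sup>2 + 2 * h r2 * (r2 - y2) - a\<^sup>2"
      by (simp add: fK_def power2_eq_square algebra_simps)
    have d: "(1/2 - y2) / 2 \<le> r2 - y2" using r2 by auto
    have Z0: "0 \<le> Z" using y by (simp add: Z_def)
    have "Z * ((1/2 - y2)/2) \<le> h r2 * (r2 - y2)" using r2 d Z0 y by (intro mult_mono) auto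
    moreover have "Z * ((1/2 - y2)/2) = (a\<^sup>2 + 1) / 2" using y by (simp add: Z_def)
    moreover have "y2\<^sup>2 \<le> r2\<^sup>2" using r2 y by (intro power_mono) auto
    ultimately have K1: "(a\<^sup>2 + 1) / 2 \<le> h r2 * (r2 - y2)" "y2\<^sup>2 \<le> r2\<^sup>2" by linarith+
    have "fK a y2 r2 = r2\<^sup>2 - y2\<^sup>2 + 2 * (h r2 * (r2 - y2)) - a\<^sup>2" unfolding e by simp
    moreover have L: "\<And>F A P Q::real. F = Q + 2*P - A \<Longrightarrow> (A+1)/2 \<le> P \<Longrightarrow> 0 \<le> Q \<Longrightarrow> 0 < F"
      by (simp add: field_simps)
    ultimately show ?thesis using K1 L[of "fK a y2 r2" "r2\<^sup>2 - y2\<^sup>2" "h r2 * (r2 - y2)" "a\<^sup>2"] L[of "fK a y2 r2" "a\<^sup>2" "h r2 * (r2 - y2)" "r2\<^sup>2 - y2\<^sup>2"] by simp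
  qed
  have cont: "continuous_on {r1..r2} (fK a y2)"
  proof -
    have "continuous_on {r1..r2} h" using cont_h by (rule continuous_on_subset) (use r1 r2 in auto)
    then show ?thesis unfolding fK_def by (intro continuous_intros)
  qed
  obtain r where r: "r1 \<le> r" "r \<le> r2" "fK a y2 r = 0"
    using IVT'[of "fK a y2" r1 0 r2] f1 f2 cont r2 by auto
  have rI: "0 < r" "r < 1/2" using r r1 r2 by auto
  define R where "R = r + h r"
  define T where "T = Theta h r"
  have hn: "0 \<le> h r" using h_nn[of r] rI by auto
  have R: "0 < R" using hn rI by (simp add: R_def)
  have T: "0 < T" "T \<le> pi/2" using Theta_pos[OF rI] by (auto simp: T_def)
  have eq: "R\<^sup>2 = (y2 + h r)\<^sup>2 + a\<^sup>2" using r by (simp add: fK_def R_def)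
  define s where "s = a / R"
  have aR: "\<bar>a\<bar> \<le> R"
  proof -
    have "a\<^sup>2 \<le> R\<^sup>2" using eq by simp
    then show ?thesis using power2_le_imp_le[of "\<bar>a\<bar>" R] R by simp
  qed
  have s: "-1 \<le> s" "s \<le> 1" using aR R by (auto simp: s_def divide_simps abs_le_iff)
  define phi where "phi = arcsin s"
  have phi: "- (pi/2) \<le> phi" "phi \<le> pi/2" unfolding phi_def using arcsin_lbound[OF s] arcsin_ubound[OF s] by auto
  have sphi: "R * sin phi = a" using s R by (simp add: phi_def s_def)
  have cphi: "R * cos phi = y2 + h r"
  proof -
    have "cos phi = sqrt (1 - s\<^sup>2)" using s by (simp add: phi_def cos_arcsin)
    also have "sqrt (1 - s\<^sup>2) = (y2 + h r) / R"
    proof (rule real_sqrt_unique)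
      have "((y2 + h r) / R)\<^sup>2 + s\<^sup>2 = ((y2 + h r)\<^sup>2 + a\<^sup>2) / R\<^sup>2"
        by (simp add: s_def power_divide flip: add_divide_distrib)
      also have "\<dots> = 1" using R by (simp add: eq[symmetric])
      finally show "((y2 + h r) / R)\<^sup>2 = 1 - s\<^sup>2" by linarith
      show "0 \<le> (y2 + h r) / R" using R hn y by simp
    qed
    finally show ?thesis using R by simp
  qed
  have aphi: "\<bar>phi\<bar> \<le> T"
  proof (rule ccontr)
    assume nle: "\<not> \<bar>phi\<bar> \<le> T"
    have ap: "\<bar>phi\<bar> \<le> pi/2" using phi by auto
    show False
    proof (cases "r \<le> r0 h")
      case True
      have cT: "R * cos T = h r" using Theta_lo[OF rI(1) True] by (simp add: R_def T_def)
      have "cos \<bar>phi\<bar> < cos T" using nle T ap by (intro cos_monotone_0_pi) auto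
      moreover have "cos \<bar>phi\<bar> = cos phi" by (cases "phi \<ge> 0") auto
      ultimately have "R * cos phi < R * cos T" using R by simp
      then show False using cT cphi y by simp
    next
      case False
      have sT: "R * sin T = 1/2" using Theta_hi(1)[of r] False rI by (simp add: R_def T_def)
      have "sin T < sin \<bar>phi\<bar>" using nle T ap by (intro sin_monotone_2pi) auto
      moreover have "sin \<bar>phi\<bar> = \<bar>sin phi\<bar>"
      proof (cases "phi \<ge> 0")
        case True
        then have "0 \<le> sin phi" using phi by (intro sin_ge_zero) auto
        then show ?thesis using True by simp
      next
        case False
        then have "0 \<le> sin (- phi)" using phi by (intro sin_ge_zero) auto
        then show ?thesis using False by simp
      qed
      ultimately have "R * sin T < R * \<bar>sin phi\<bar>" using R by simp
      also have "R * \<bar>sin phi\<bar> = \<bar>a\<bar>" by (metis R abs_mult abs_of_pos sphi)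
      finally show False using sT a by simp
    qed
  qed
  define th where "th = phi / T"
  have th: "th \<in> {-1..1}" using aphi T by (auto simp: th_def divide_simps abs_le_iff)
  have thT: "th * T = phi" using T by (simp add: th_def)
  have "Kinv h (r, th) = (y1, y2)"
    using sphi cphi by (simp add: Kinv_def thT[unfolded T_def] R_def[symmetric] a_def)
  then show ?thesis using rI th by (intro exI[of _ r] exI[of _ th]) auto
qed

lemma K_props:
  assumes y: "0 \<le> y1" "y1 \<le> 1" "0 \<le> y2" "y2 < 1/2" "(y1, y2) \<noteq> (1/2, 0)"
  shows "fst (K h (y1, y2)) \<in> {0<..<1/2}" "snd (K h (y1, y2)) \<in> {-1..1}"
        "Kinv h (K h (y1, y2)) = (y1, y2)"
proof -
  have ex: "\<exists>!p. p \<in> {0<..<1/2} \<times> {-1..1} \<and> Kinv h p = (y1, y2)"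
  proof (rule ex_ex1I)
    show "\<exists>p. p \<in> {0<..<1/2} \<times> {-1..1} \<and> Kinv h p = (y1, y2)"
      using K_exists[OF y] by auto
  next
    fix p p' assume p: "p \<in> {0<..<1/2} \<times> {-1..1} \<and> Kinv h p = (y1, y2)"
      and p': "p' \<in> {0<..<1/2} \<times> {-1..1} \<and> Kinv h p' = (y1, y2)"
    obtain r th where "p = (r, th)" by fastforce
    moreover obtain r' th' where "p' = (r', th')" by fastforce
    ultimately show "p = p'" using K_unique[of r th y1 y2 r' th'] p p' y by auto
  qed
  have "K h (y1, y2) \<in> {0<..<1/2} \<times> {-1..1} \<and> Kinv h (K h (y1, y2)) = (y1, y2)"
    unfolding K_def by (rule theI'[OF ex])
  then show "fst (K h (y1, y2)) \<in> {0<..<1/2}" "snd (K h (y1, y2)) \<in> {-1..1}"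
        "Kinv h (K h (y1, y2)) = (y1, y2)" by auto
qed

end


lemma norm_cmp: "(a::real)\<^sup>2 \<le> c\<^sup>2 \<Longrightarrow> (b::real)\<^sup>2 \<le> d\<^sup>2 \<Longrightarrow> norm (a, b) \<le> norm (c, d)"
  by (simp add: norm_Pair real_sqrt_le_mono add_mono)

lemma sq_le_abs: "\<bar>a::real\<bar> \<le> \<bar>c\<bar> \<Longrightarrow> a\<^sup>2 \<le> c\<^sup>2"
  by (simp add: abs_le_square_iff)

context hs begin

lemma low_bound:
  assumes d: "-1 < \<delta>" "\<delta> < 1"
    and y: "0 \<le> y1" "y1 \<le> 1" "0 \<le> y2" "y2 < 1/2"
    and Wm: "\<forall>r\<in>{0<..<1/2}. 1 + h1 r * (1 - cos (Theta h r)) \<le> Wm" "1 \<le> Wm"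
  shows "norm (Psi_low h \<delta> (y1, y2) - (y1, y2)) \<le> 12 * Wm * \<bar>\<delta>\<bar> * min (norm (y1, y2)) (norm (y1 - 1, y2))"
proof (cases "(y1, y2) = (1/2, 0)")
  case True
  then have "Psi_low h \<delta> (y1, y2) = (y1, y2)" by (simp add: Psi_low_def)
  then show ?thesis using Wm by simp
next
  case False
  note Kp = K_props[OF y False]
  obtain r th where K: "K h (y1, y2) = (r, th)" by fastforce
  have r: "0 < r" "r < 1/2" and th: "-1 \<le> th" "th \<le> 1" using Kp K by auto
  have x: "Kinv h (r, th) = (y1, y2)" using Kp K by simp
  define g where "g = gfun h \<delta> r th"
  have P: "Psi_low h \<delta> (y1, y2) = Kinv h (r, g)" using False K by (auto simp: Psi_low_def g_def)
  define R where "R = r + h r"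
  define T where "T = Theta h r"
  define W where "W = 1 + h1 r * (1 - cos (Theta h r))"
  have hn: "0 \<le> h r" using h_nn r by auto
  have R0: "0 \<le> R" using hn r by (simp add: R_def)
  have T: "0 < T" "T \<le> pi/2" using Theta_pos[OF r] by (auto simp: T_def)
  have WW: "W \<le> Wm" using Wm r by (auto simp: W_def)
  have W0: "0 \<le> W" using w_props[OF r, of 0] by (simp add: W_def)
  have gb: "\<bar>g - th\<bar> \<le> \<bar>\<delta>\<bar> * W * (if th \<le> 0 then 1 + th else 1 - th)"
    using g_props(2)[OF r d th] by (simp add: g_def W_def)
  have diff: "norm (Psi_low h \<delta> (y1, y2) - (y1, y2)) \<le> 2 * R * T * \<bar>g - th\<bar>"
    using Kinv_diff[OF r, of g th] P x by (simp add: R_def T_def)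
  have RT0: "0 \<le> 2 * R * T" using R0 T by simp
  have key: "R * (T * u) \<le> 6 * norm (Kinv h (r, -v))" if uv: "0 \<le> u" "u \<le> 1" "u = 1 - v" "0 \<le> v" "v \<le> 1" for u v
  proof -
    have "T * u \<le> T * 1" using T uv by (intro mult_left_mono) auto
    then have "T * u \<le> pi/2" using T by linarith
    moreover have "0 \<le> T * u" using T uv by simp
    ultimately have "0 \<le> T * u" "T * u \<le> pi/2" by auto
    then have j: "T * u \<le> 2 * sin (T * u)" by (rule jordan2)
    have gg: "R * sin (T * (1 + - v)) \<le> 3 * norm (Kinv h (r, - v))"
      using geom[OF r, of "-v"] uv by (simp add: R_def T_def)
    have "R * (T * u) \<le> R * (2 * sin (T * u))" using j R0 by (rule mult_left_mono)
    also have "\<dots> = 2 * (R * sin (T * (1 + - v)))" using uv by simp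
    also have "\<dots> \<le> 6 * norm (Kinv h (r, - v))" using gg by simp
    finally show ?thesis .
  qed
  show ?thesis
  proof (cases "th \<le> 0")
    case True
    have y1le: "y1 \<le> 1/2"
    proof -
      have "y1 - 1/2 = R * sin (th * T)" using Kinv_fK(3)[OF x r] by (simp add: R_def T_def)
      moreover have "sin (th * T) \<le> 0"
      proof -
        have "(- th) * T \<le> 1 * T" using th T by (intro mult_right_mono) auto
        moreover have "0 \<le> (- th) * T" using True T by (intro mult_nonneg_nonneg) auto
        ultimately have "0 \<le> sin ((- th) * T)" using T by (intro sin_ge_zero) auto
        then show ?thesis by simp
      qed
      moreover have "R * sin (th * T) \<le> 0" using R0 \<open>sin (th * T) \<le> 0\<close> by (rule mult_nonneg_nonpos)
      ultimately show ?thesis by linarith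
    qed
    have nm: "norm (y1, y2) \<le> norm (y1 - 1, y2)" using y y1le by (intro norm_cmp sq_le_abs) auto
    have k0: "R * (T * (1 + th)) \<le> 6 * norm (Kinv h (r, - (- th)))" by (rule key) (use True th in auto)
    then have k: "R * (T * (1 + th)) \<le> 6 * norm (y1, y2)" by (simp only: minus_minus x)
    have "2 * R * T * \<bar>g - th\<bar> \<le> 2 * R * T * (\<bar>\<delta>\<bar> * W * (1 + th))"
      using gb True RT0 by (intro mult_left_mono) auto
    with diff have "norm (Psi_low h \<delta> (y1, y2) - (y1, y2)) \<le> 2 * R * T * (\<bar>\<delta>\<bar> * W * (1 + th))"
      by linarith
    also have "\<dots> = 2 * \<bar>\<delta>\<bar> * W * (R * (T * (1 + th)))" by (simp add: algebra_simps)
    also have "\<dots> \<le> 2 * \<bar>\<delta>\<bar> * W * (6 * norm (y1, y2))" using k W0 by (intro mult_left_mono) auto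
    also have "\<dots> \<le> 2 * \<bar>\<delta>\<bar> * Wm * (6 * norm (y1, y2))" using WW by (intro mult_left_mono mult_right_mono) auto
    also have "\<dots> = 12 * Wm * \<bar>\<delta>\<bar> * min (norm (y1, y2)) (norm (y1 - 1, y2))"
      using nm by (simp add: min_def)
    finally show ?thesis .
  next
    case False
    have y1ge: "1/2 \<le> y1"
    proof -
      have "y1 - 1/2 = R * sin (th * T)" using Kinv_fK(3)[OF x r] by (simp add: R_def T_def)
      moreover have "0 \<le> sin (th * T)"
      proof -
        have "th * T \<le> 1 * T" using th T by (intro mult_right_mono) auto
        then have "th * T \<le> pi" using T by linarith
        moreover have "0 \<le> th * T" using False T by simp
        ultimately show ?thesis by (intro sin_ge_zero)
      qed
      moreover have "0 \<le> R * sin (th * T)" using R0 \<open>0 \<le> sin (th * T)\<close> by (rule mult_nonneg_nonneg)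
      ultimately show ?thesis by linarith
    qed
    have x': "Kinv h (r, - th) = (1 - y1, y2)"
      using x by (simp add: Kinv_def)
    have nm: "norm (y1 - 1, y2) \<le> norm (y1, y2)" using y y1ge by (intro norm_cmp sq_le_abs) auto
    have n1: "norm (1 - y1, y2) = norm (y1 - 1, y2)" by (simp add: norm_Pair power2_commute)
    have k0: "R * (T * (1 - th)) \<le> 6 * norm (Kinv h (r, - th))" by (rule key) (use False th in auto)
    then have k: "R * (T * (1 - th)) \<le> 6 * norm (y1 - 1, y2)" by (simp only: x' n1)
    have "2 * R * T * \<bar>g - th\<bar> \<le> 2 * R * T * (\<bar>\<delta>\<bar> * W * (1 - th))"
      using gb False RT0 by (intro mult_left_mono) auto
    with diff have "norm (Psi_low h \<delta> (y1, y2) - (y1, y2)) \<le> 2 * R * T * (\<bar>\<delta>\<bar> * W * (1 - th))"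
      by linarith
    also have "\<dots> = 2 * \<bar>\<delta>\<bar> * W * (R * (T * (1 - th)))" by (simp add: algebra_simps)
    also have "\<dots> \<le> 2 * \<bar>\<delta>\<bar> * W * (6 * norm (y1 - 1, y2))" using k W0 by (intro mult_left_mono) auto
    also have "\<dots> \<le> 2 * \<bar>\<delta>\<bar> * Wm * (6 * norm (y1 - 1, y2))" using WW by (intro mult_left_mono mult_right_mono) auto
    also have "\<dots> = 12 * Wm * \<bar>\<delta>\<bar> * min (norm (y1, y2)) (norm (y1 - 1, y2))"
      using nm by (simp add: min_def)
    finally show ?thesis .
  qed
qed

end


lemma norm_eq: "(a::real)\<^sup>2 = c\<^sup>2 \<Longrightarrow> (b::real)\<^sup>2 = d\<^sup>2 \<Longrightarrow> norm (a, b) = norm (c, d)"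
  by (simp add: norm_Pair)

lemma infdist_ge:
  assumes "\<And>c. c \<in> corners \<Longrightarrow> m \<le> dist x c"
  shows "m \<le> infdist x corners"
proof -
  have ne: "corners \<noteq> {}" by (simp add: corners_def)
  show ?thesis unfolding infdist_notempty[OF ne] by (rule cINF_greatest[OF ne]) (rule assms)
qed

lemma dist_pair: "dist ((x1::real), (x2::real)) (a, b) = norm (x1 - a, x2 - b)"
  by (simp add: dist_norm)

theorem proposition2p6:
  fixes h h1 h2 h3 :: "real \<Rightarrow> real"
  assumes nonneg: "\<forall>r\<in>{0..<1/2}. h r \<ge> 0"
    and mono: "mono_on {0..<1/2} h"
    and zero: "\<forall>r\<in>{0..1/10}. h r = 0"
    and blowup: "filterlim h at_top (at_left (1/2))"
    and d1: "\<forall>r\<in>{0..<1/2}. (h has_real_derivative h1 r) (at r within {0..<1/2})"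
    and d2: "\<forall>r\<in>{0..<1/2}. (h1 has_real_derivative h2 r) (at r within {0..<1/2})"
    and d3: "\<forall>r\<in>{0..<1/2}. (h2 has_real_derivative h3 r) (at r within {0..<1/2})"
    and c3: "continuous_on {0..<1/2} h3"
    and O1: "\<exists>M. \<forall>r\<in>{0<..<1/2}. \<bar>(h1 r)\<^sup>2\<bar> \<le> M * (r + h r) ^ 3"
    and O2: "\<exists>M. \<forall>r\<in>{0<..<1/2}. \<bar>h2 r * h1 r\<bar> \<le> M * (r + h r) ^ 3"
    and O3: "\<exists>M. \<forall>r\<in>{0<..<1/2}. \<bar>h3 r\<bar> \<le> M * (r + h r) ^ 2"
  shows "\<exists>C>0. \<forall>\<delta>::real. -1 < \<delta> \<and> \<delta> < 1 \<longrightarrow>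
           (\<forall>x \<in> {0..1} \<times> {0..1}.
              norm (Psi h \<delta> x - x) \<le> C * \<bar>\<delta>\<bar> * infdist x corners)"
proof -
  interpret hs h h1
    using nonneg mono zero blowup d1 O1 by unfold_locales
  obtain Wm where Wm: "1 \<le> Wm" "\<forall>r\<in>{0<..<1/2}. 1 + h1 r * (1 - cos (Theta h r)) \<le> Wm"
    using W_bound by blast
  define C where "C = 12 * Wm + 4"
  have C: "0 < C" using Wm by (simp add: C_def)
  have main: "norm (Psi h \<delta> x - x) \<le> C * \<bar>\<delta>\<bar> * infdist x corners"
    if d: "-1 < \<delta>" "\<delta> < 1" and x: "x \<in> {0..1} \<times> {0..1}" for \<delta> x
  proof -
    obtain x1 x2 where xx: "x = (x1, x2)" by fastforce
    have x1: "0 \<le> x1" "x1 \<le> 1" and x2: "0 \<le> x2" "x2 \<le> 1" using x xx by auto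
    have inf0: "0 \<le> infdist x corners" by (rule infdist_nonneg)
    consider "x2 = 1/2" | "x2 < 1/2" | "x2 > 1/2" by linarith
    then show ?thesis
    proof cases
      case 1
      have nPsi: "norm (Psi h \<delta> x - x) \<le> \<bar>\<delta>\<bar>"
      proof (cases "x1 \<le> 1/2")
        case True
        then have "Psi h \<delta> x - x = (\<delta> * x1, 0)" using 1 by (simp add: Psi_def xx algebra_simps)
        then have "norm (Psi h \<delta> x - x) = \<bar>\<delta>\<bar> * x1" using x1 by (simp add: abs_mult)
        also have "\<dots> \<le> \<bar>\<delta>\<bar> * 1" using x1 by (intro mult_left_mono) auto
        finally show ?thesis by simp
      next
        case False
        then have "Psi h \<delta> x - x = (\<delta> * (1 - x1), 0)" using 1 by (simp add: Psi_def xx field_simps)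
        then have "norm (Psi h \<delta> x - x) = \<bar>\<delta>\<bar> * (1 - x1)" using x1 by (simp add: abs_mult)
        also have "\<dots> \<le> \<bar>\<delta>\<bar> * 1" using x1 by (intro mult_left_mono) auto
        finally show ?thesis by simp
      qed
      have "1/2 \<le> infdist x corners"
      proof (rule infdist_ge)
        fix c assume "c \<in> corners"
        then have "c \<in> {(0,0), (0,1), (1,0), (1,1)}" by (simp add: corners_def)
        then obtain a b where c: "c = (a, b)" "b = 0 \<or> b = 1" by auto
        have "norm (0::real, 1/2::real) \<le> norm (x1 - a, x2 - b)"
          by (rule norm_cmp) (use c in \<open>auto simp: power2_eq_square 1\<close>)
        then show "1/2 \<le> dist x c" by (simp add: xx c dist_pair)
      qed
      then have "\<bar>\<delta>\<bar> * (1/2) \<le> \<bar>\<delta>\<bar> * infdist x corners" by (intro mult_left_mono) auto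
      moreover have "\<bar>\<delta>\<bar> * infdist x corners \<le> (C / 2) * (\<bar>\<delta>\<bar> * infdist x corners)"
        using Wm inf0 by (intro mult_left_le_one_le[where x="\<bar>\<delta>\<bar> * infdist x corners" and y=1, simplified] order.trans[OF _ mult_right_mono[of 1 "C/2"]]) (auto simp: C_def)
      ultimately show ?thesis using nPsi by (simp add: algebra_simps)
    next
      case 2
      have P: "Psi h \<delta> x = Psi_low h \<delta> (x1, x2)" using 2 by (simp add: Psi_def xx)
      define m where "m = min (norm (x1, x2)) (norm (x1 - 1, x2))"
      have lb: "norm (Psi h \<delta> x - x) \<le> 12 * Wm * \<bar>\<delta>\<bar> * m"
        using low_bound[OF d x1 x2(1) 2 Wm(2) Wm(1)] P by (simp add: xx m_def)
      have "m \<le> infdist x corners"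
      proof (rule infdist_ge)
        fix c assume "c \<in> corners"
        then have "c = (0,0) \<or> c = (0,1) \<or> c = (1,0) \<or> c = (1,1)" by (simp add: corners_def)
        moreover have "norm (x1, x2) \<le> norm (x1, x2 - 1)" using 2 x2 by (intro norm_cmp sq_le_abs) auto
        moreover have "norm (x1 - 1, x2) \<le> norm (x1 - 1, x2 - 1)" using 2 x2 by (intro norm_cmp sq_le_abs) auto
        ultimately show "m \<le> dist x c" by (auto simp: xx dist_pair m_def)
      qed
      then have "12 * Wm * \<bar>\<delta>\<bar> * m \<le> C * \<bar>\<delta>\<bar> * infdist x corners"
        using Wm by (intro mult_mono) (auto simp: C_def m_def)
      then show ?thesis using lb by linarith
    next
      case 3
      define y2 where "y2 = 1 - x2"
      have y2: "0 \<le> y2" "y2 < 1/2" using 3 x2 by (auto simp: y2_def)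
      define P where "P = Psi_low h \<delta> (x1, y2)"
      have Pe: "Psi h \<delta> x = (fst P, 1 - snd P)" using 3 by (simp add: Psi_def xx P_def y2_def)
      have "Psi h \<delta> x - x = (fst P - x1, 1 - snd P - x2)" using Pe xx by simp
      then have "norm (Psi h \<delta> x - x) = norm (fst P - x1, 1 - snd P - x2)" by simp
      also have "\<dots> = norm (fst P - x1, snd P - y2)"
        by (rule norm_eq) (simp_all add: y2_def power2_eq_square algebra_simps)
      also have "\<dots> = norm (P - (x1, y2))" by (cases P) simp
      finally have ne: "norm (Psi h \<delta> x - x) = norm (P - (x1, y2))" .
      define m where "m = min (norm (x1, y2)) (norm (x1 - 1, y2))"
      have lb: "norm (Psi h \<delta> x - x) \<le> 12 * Wm * \<bar>\<delta>\<bar> * m"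
        unfolding ne P_def m_def by (rule low_bound[OF d x1 y2 Wm(2) Wm(1)])
      have "m \<le> infdist x corners"
      proof (rule infdist_ge)
        fix c assume "c \<in> corners"
        then have "c = (0,0) \<or> c = (0,1) \<or> c = (1,0) \<or> c = (1,1)" by (simp add: corners_def)
        moreover have "norm (x1, y2) \<le> norm (x1, x2)" using 3 x2 by (intro norm_cmp sq_le_abs) (auto simp: y2_def)
        moreover have "norm (x1 - 1, y2) \<le> norm (x1 - 1, x2)" using 3 x2 by (intro norm_cmp sq_le_abs) (auto simp: y2_def)
        moreover have "norm (x1, y2) = norm (x1, x2 - 1)" by (rule norm_eq) (auto simp: y2_def power2_commute)
        moreover have "norm (x1 - 1, y2) = norm (x1 - 1, x2 - 1)" by (rule norm_eq) (auto simp: y2_def power2_commute)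
        ultimately show "m \<le> dist x c" by (auto simp: xx dist_pair m_def)
      qed
      then have "12 * Wm * \<bar>\<delta>\<bar> * m \<le> C * \<bar>\<delta>\<bar> * infdist x corners"
        using Wm by (intro mult_mono) (auto simp: C_def m_def)
      then show ?thesis using lb by linarith
    qed
  qed
  show ?thesis using C main by blast
qed


end
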